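(* Let $\varphi$ be an almost identity PC-map of $\mathrm{UT}(n,F)$ and let $k$ be an integer with $2\le k\le n-3$. If conditions $Z_{k-1}$ and $Y_k$ hold for $\varphi$, then condition $Z_k$ holds for $\varphi$.
   Context: $F$ is a field and $n\in\mathbb N\cup\{\infty\}$. $\mathrm{UT}(n,F)$ is the group of upper unitriangular $n\times n$ matrices over $F$ (for $n=\infty$: all $\mathbb N\times\mathbb N$ matrices with $1$ on the diagonal and $0$ below it). Convention: $\infty+m=\infty$ for $m\in\mathbb Z$. $e$ is the identity matrix, $e_{ij}$ the matrix unit, $t_{ij}(\alpha)=e+\alpha e_{ij}$ ($i<j$). $[x,y]=xyx^{-1}y^{-1}$. A PC-map is a bijection $\varphi$ of the group with $\varphi([x,y])=[\varphi(x),\varphi(y)]$ for all $x,y$; it is almost identity if $\varphi(t_{ij}(\alpha))=t_{ij}(\alpha)$ for all $i<j$, $\alpha\in F$. $C$ denotes the center of $\mathrm{UT}(n,F)$ (trivial if $n=\infty$, equal to $\{t_{1n}(\alpha):\alpha\in F\}$ if $n$ is finite). Conditions: $Y_k$ ($k\le n-3$): for all $\beta,\alpha_1,\dots,\alpha_{k-1}\in F$, the matrix $y=t_{k+1\,k+2}(\beta)\prod_{i=1}^{k-1}t_{ik}(\alpha_i)$ satisfies $\varphi(y)\in yC$. $Z_k$ ($k\le n-3$): for all $\gamma_1,\dots,\gamma_k\in F$, the matrix $z=\prod_{i=1}^{k}t_{i\,k+3}(\gamma_i)$ satisfies $\varphi(z)=z$. (Thus $Z_{k-1}$ says $\varphi$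 fixes every $\prod_{i=1}^{k-1}t_{i\,k+2}(\gamma_i)$.) *)

theory Defs
  imports "HOL-Algebra.Group" "HOL-Library.Extended_Nat"
begin

text \<open>Matrices are functions nat => nat => 'a with rows/columns indexed by
  1,...,n (n :: enat, so n = infinity gives N x N matrices). Entries outside
  the index range are 0.\<close>

type_synonym 'a mat = "nat \<Rightarrow> nat \<Rightarrow> 'a"

definition idx :: "enat \<Rightarrow> nat \<Rightarrow> bool" where
  "idx n i \<longleftrightarrow> 1 \<le> i \<and> enat i \<le> n"

definition UT :: "enat \<Rightarrow> ('a::field) mat set" where
  "UT n = {A. (\<forall>i j. \<not> (idx n i \<and> idx n j) \<longrightarrow> A i j = 0)
              \<and> (\<forall>i. idx n i \<longrightarrow> A i i = 1)
              \<and> (\<forall>i j. j < i \<longrightarrow> A i j = 0)}"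

definition ut_one :: "enat \<Rightarrow> ('a::field) mat" where
  "ut_one n = (\<lambda>i j. if i = j \<and> idx n i then 1 else 0)"

text \<open>Product of upper triangular matrices: only the finitely many
  indices i..j contribute.\<close>
definition ut_mult :: "('a::field) mat \<Rightarrow> 'a mat \<Rightarrow> 'a mat" where
  "ut_mult A B = (\<lambda>i j. \<Sum>l\<in>{i..j}. A i l * B l j)"

definition UT_group :: "enat \<Rightarrow> ('a::field) mat monoid" where
  "UT_group n = \<lparr>carrier = UT n, monoid.mult = ut_mult, one = ut_one n\<rparr>"

definition ut_comm :: "enat \<Rightarrow> ('a::field) mat \<Rightarrow> 'a mat \<Rightarrow> 'a mat" where
  "ut_comm n x y = x \<otimes>\<^bsub>UT_group n\<^esub> y \<otimes>\<^bsub>UT_group n\<^esub> inv\<^bsub>UT_group n\<^esub> x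
                    \<otimes>\<^bsub>UT_group n\<^esub> inv\<^bsub>UT_group n\<^esub> y"

definition tr :: "enat \<Rightarrow> nat \<Rightarrow> nat \<Rightarrow> ('a::field) \<Rightarrow> 'a mat" where
  "tr n i j \<alpha> = (\<lambda>a b. ut_one n a b + (if a = i \<and> b = j then \<alpha> else 0))"

definition ut_prod :: "enat \<Rightarrow> ('a::field) mat list \<Rightarrow> 'a mat" where
  "ut_prod n xs = foldr ut_mult xs (ut_one n)"

definition ut_center :: "enat \<Rightarrow> ('a::field) mat set" where
  "ut_center n = {c \<in> UT n. \<forall>x \<in> UT n. ut_mult c x = ut_mult x c}"

definition PC_map :: "enat \<Rightarrow> (('a::field) mat \<Rightarrow> 'a mat) \<Rightarrow> bool" where
  "PC_map n \<phi> \<longleftrightarrow> bij_betw \<phi> (UT n) (UT n)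
     \<and> (\<forall>x \<in> UT n. \<forall>y \<in> UT n. \<phi> (ut_comm n x y) = ut_comm n (\<phi> x) (\<phi> y))"

definition almost_identity :: "enat \<Rightarrow> (('a::field) mat \<Rightarrow> 'a mat) \<Rightarrow> bool" where
  "almost_identity n \<phi> \<longleftrightarrow>
     (\<forall>i j \<alpha>. idx n i \<and> idx n j \<and> i < j \<longrightarrow> \<phi> (tr n i j \<alpha>) = tr n i j \<alpha>)"

definition cond_Y :: "enat \<Rightarrow> (('a::field) mat \<Rightarrow> 'a mat) \<Rightarrow> nat \<Rightarrow> bool" where
  "cond_Y n \<phi> k \<longleftrightarrow> (\<forall>(\<beta>::'a) (\<alpha>::nat \<Rightarrow> 'a).
     let y = ut_mult (tr n (k+1) (k+2) \<beta>) (ut_prod n (map (\<lambda>i. tr n i k (\<alpha> i)) [1..<k]))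
     in \<phi> y \<in> (\<lambda>c. ut_mult y c) ` ut_center n)"

definition cond_Z :: "enat \<Rightarrow> (('a::field) mat \<Rightarrow> 'a mat) \<Rightarrow> nat \<Rightarrow> bool" where
  "cond_Z n \<phi> k \<longleftrightarrow> (\<forall>\<gamma>::nat \<Rightarrow> 'a.
     let z = ut_prod n (map (\<lambda>i. tr n i (k+3) (\<gamma> i)) [1..<k+1])
     in \<phi> z = z)"

end

theory Submission
  imports Defs
begin

lemma UT_iff: "A \<in> UT n \<longleftrightarrow> (\<forall>i j. \<not> (idx n i \<and> idx n j) \<longrightarrow> A i j = 0)
              \<and> (\<forall>i. idx n i \<longrightarrow> A i i = 1)
              \<and> (\<forall>i j. j < i \<longrightarrow> A i j = 0)"
  by (simp add: UT_def)

lemma ut_mult_closed: assumes "A \<in> UT n" "B \<in> UT n" shows "ut_mult A B \<in> UT n"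
proof -
  have "ut_mult A B i j = 0" if "\<not> (idx n i \<and> idx n j)" for i j
    using assms that unfolding UT_iff ut_mult_def by (auto intro!: sum.neutral)
  moreover have "ut_mult A B i i = 1" if "idx n i" for i
    using assms that unfolding UT_iff ut_mult_def by auto
  moreover have "ut_mult A B i j = 0" if "j < i" for i j
    using that unfolding ut_mult_def by auto
  ultimately show ?thesis unfolding UT_iff by blast
qed

lemma ut_one_UT: "ut_one n \<in> UT n"
  unfolding UT_iff ut_one_def by auto

lemma ut_one_mult: assumes "A \<in> UT n" shows "ut_mult (ut_one n) A = A"
proof (intro ext)
  fix i j
  have "ut_mult (ut_one n) A i j = (\<Sum>l\<in>{i..j}. if l = i then (if idx n i then A i j else 0) else 0)"
    unfolding ut_mult_def ut_one_def by (rule sum.cong) auto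
  also have "\<dots> = A i j" using assms unfolding UT_iff by auto
  finally show "ut_mult (ut_one n) A i j = A i j" .
qed

lemma ut_mult_one: assumes "A \<in> UT n" shows "ut_mult A (ut_one n) = A"
proof (intro ext)
  fix i j
  have "ut_mult A (ut_one n) i j = (\<Sum>l\<in>{i..j}. if l = j then (if idx n j then A i j else 0) else 0)"
    unfolding ut_mult_def ut_one_def by (rule sum.cong) auto
  also have "\<dots> = A i j" using assms unfolding UT_iff by auto
  finally show "ut_mult A (ut_one n) i j = A i j" .
qed

lemma ut_mult_assoc: "ut_mult (ut_mult A B) C = ut_mult A (ut_mult B C)"
proof (intro ext)
  fix i j
  have "ut_mult (ut_mult A B) C i j = (\<Sum>l\<in>{i..j}. \<Sum>m\<in>{i..l}. A i m * B m l * C l j)"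
    unfolding ut_mult_def by (simp add: sum_distrib_right)
  also have "\<dots> = (\<Sum>m\<in>{i..j}. \<Sum>l\<in>{m..j}. A i m * B m l * C l j)"
  proof -
    have "(\<Sum>l\<in>{i..j}. \<Sum>m\<in>{i..l}. A i m * B m l * C l j)
       = (\<Sum>l\<in>{i..j}. \<Sum>m\<in>{m. m \<in> {i..j} \<and> m \<le> l}. A i m * B m l * C l j)"
      by (rule sum.cong) (auto intro: sum.cong)
    also have "\<dots> = (\<Sum>m\<in>{i..j}. \<Sum>l\<in>{l. l \<in> {i..j} \<and> m \<le> l}. A i m * B m l * C l j)"
      by (rule sum.swap_restrict) auto
    also have "\<dots> = (\<Sum>m\<in>{i..j}. \<Sum>l\<in>{m..j}. A i m * B m l * C l j)"
      by (rule sum.cong) (auto intro: sum.cong)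
    finally show ?thesis .
  qed
  also have "\<dots> = ut_mult A (ut_mult B C) i j"
    unfolding ut_mult_def by (simp add: sum_distrib_left mult.assoc)
  finally show "ut_mult (ut_mult A B) C i j = ut_mult A (ut_mult B C) i j" .
qed

function linv :: "enat \<Rightarrow> ('a::field) mat \<Rightarrow> nat \<Rightarrow> nat \<Rightarrow> 'a" where
  "linv n A i j = (if \<not> (idx n i \<and> idx n j) \<or> j < i then 0 else if i = j then 1
     else - (\<Sum>l\<in>{i..<j}. linv n A i l * A l j))"
  by auto
termination by (relation "measure (\<lambda>(n,A,i,j). j - i)") auto

declare linv.simps[simp del]

lemma linv_UT: "linv n A \<in> UT n"
  unfolding UT_iff by (auto simp: linv.simps)

lemma linv_mult: assumes "A \<in> UT n" shows "ut_mult (linv n A) A = ut_one n"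
proof (intro ext)
  fix i j
  show "ut_mult (linv n A) A i j = ut_one n i j"
  proof (cases "idx n i \<and> idx n j \<and> i < j")
    case True
    then have "{i..j} = insert j {i..<j}" by auto
    then have "ut_mult (linv n A) A i j = linv n A i j * A j j + (\<Sum>l\<in>{i..<j}. linv n A i l * A l j)"
      unfolding ut_mult_def by simp
    also have "\<dots> = 0" using True assms unfolding UT_iff
      by (subst (1) linv.simps) auto
    finally show ?thesis using True unfolding ut_one_def by simp
  next
    case False
    then show ?thesis using assms linv_UT[of n A] unfolding ut_mult_def ut_one_def UT_iff
      by (cases "i = j") (auto intro!: sum.neutral simp: not_less)
  qed
qed

lemma UT_group: "group (UT_group n :: ('a::field) mat monoid)"
  by (rule groupI) (auto simp: UT_group_def ut_mult_closed ut_one_UT ut_one_mult ut_mult_assoc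
      intro!: bexI[of _ "linv n _"] linv_mult linv_UT)

definition mk :: "enat \<Rightarrow> ('a::field) mat \<Rightarrow> 'a mat" where
  "mk n S = (\<lambda>a b. ut_one n a b + S a b)"

definition spt :: "enat \<Rightarrow> ('a::field) mat \<Rightarrow> bool" where
  "spt n S \<longleftrightarrow> (\<forall>a b. S a b \<noteq> 0 \<longrightarrow> idx n a \<and> idx n b \<and> a < b)"

lemma spt_zero: "spt n S \<Longrightarrow> \<not> (idx n a \<and> idx n b \<and> a < b) \<Longrightarrow> S a b = 0"
  unfolding spt_def by blast

lemma mk_UT: assumes "spt n S" shows "mk n S \<in> UT n"
  unfolding UT_iff mk_def ut_one_def using spt_zero[OF assms] by auto

lemma mk_mult: assumes "spt n S" "spt n T"
  shows "ut_mult (mk n S) (mk n T) = mk n (\<lambda>a b. S a b + T a b + ut_mult S T a b)"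
proof (intro ext)
  fix a b
  have "ut_mult (mk n S) (mk n T) a b = ut_mult (ut_one n) (ut_one n) a b + ut_mult S (ut_one n) a b
     + ut_mult (ut_one n) T a b + ut_mult S T a b"
    unfolding ut_mult_def mk_def by (simp add: algebra_simps sum.distrib)
  moreover have "ut_mult S (ut_one n) a b = S a b"
  proof -
    have "ut_mult S (ut_one n) a b = (\<Sum>l\<in>{a..b}. if l = b then (if idx n b then S a b else 0) else 0)"
      unfolding ut_mult_def ut_one_def by (rule sum.cong) auto
    then show ?thesis using assms(1) unfolding spt_def using spt_zero[OF assms(1), of a b] by (cases "b < a") auto
  qed
  moreover have "ut_mult (ut_one n) T a b = T a b"
  proof -
    have "ut_mult (ut_one n) T a b = (\<Sum>l\<in>{a..b}. if l = a then (if idx n a then T a b else 0) else 0)"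
      unfolding ut_mult_def ut_one_def by (rule sum.cong) auto
    then show ?thesis using spt_zero[OF assms(2), of a b] by (cases "b < a") auto
  qed
  moreover have "ut_mult (ut_one n) (ut_one n) = (ut_one n :: 'a mat)"
    using ut_one_mult[OF ut_one_UT] .
  ultimately show "ut_mult (mk n S) (mk n T) a b = mk n (\<lambda>a b. S a b + T a b + ut_mult S T a b) a b"
    unfolding mk_def by simp
qed

lemma spt_mult: assumes "spt n S" "spt n T"
  shows "spt n (\<lambda>a b. S a b + T a b + ut_mult S T a b)"
proof -
  have "idx n a \<and> idx n b \<and> a < b" if "ut_mult S T a b \<noteq> 0" for a b
  proof -
    from that obtain l where "S a l * T l b \<noteq> 0" unfolding ut_mult_def
      by (meson sum.neutral)
    then show ?thesis using assms unfolding spt_def by force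
  qed
  then show ?thesis using assms unfolding spt_def by (metis add.right_neutral add_0)
qed

lemma comm_eq:
  assumes "x \<in> UT n" "y \<in> UT n" "w \<in> UT n" "ut_mult x y = ut_mult (ut_mult w y) x"
  shows "ut_comm n x y = (w :: ('a::field) mat)"
proof -
  interpret G: group "UT_group n :: 'a mat monoid" by (rule UT_group)
  have c: "carrier (UT_group n) = UT n" "\<And>a b. a \<otimes>\<^bsub>UT_group n\<^esub> b = ut_mult a b"
    by (simp_all add: UT_group_def)
  have "ut_comm n x y = x \<otimes>\<^bsub>UT_group n\<^esub> y \<otimes>\<^bsub>UT_group n\<^esub> inv\<^bsub>UT_group n\<^esub> x
                    \<otimes>\<^bsub>UT_group n\<^esub> inv\<^bsub>UT_group n\<^esub> y" by (simp add: ut_comm_def)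
  also have "\<dots> = w \<otimes>\<^bsub>UT_group n\<^esub> y \<otimes>\<^bsub>UT_group n\<^esub> x \<otimes>\<^bsub>UT_group n\<^esub> inv\<^bsub>UT_group n\<^esub> x
                    \<otimes>\<^bsub>UT_group n\<^esub> inv\<^bsub>UT_group n\<^esub> y" using assms(4) by (simp add: c)
  also have "\<dots> = w" using assms(1-3) by (simp add: c[symmetric] G.m_assoc)
  finally show ?thesis .
qed

lemma comm_center:
  assumes "x \<in> UT n" "y \<in> UT n" "c \<in> ut_center n"
  shows "ut_comm n (ut_mult x c) y = ut_comm n x (y :: ('a::field) mat)"
proof -
  interpret G: group "UT_group n :: 'a mat monoid" by (rule UT_group)
  have c: "carrier (UT_group n) = UT n" "\<And>a b. a \<otimes>\<^bsub>UT_group n\<^esub> b = ut_mult a b"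
    by (simp_all add: UT_group_def)
  have cU: "c \<in> UT n" and cc: "ut_mult c y = ut_mult y c" using assms(2,3) by (auto simp: ut_center_def)
  have "ut_comm n (ut_mult x c) y = x \<otimes>\<^bsub>UT_group n\<^esub> (c \<otimes>\<^bsub>UT_group n\<^esub> y) \<otimes>\<^bsub>UT_group n\<^esub> inv\<^bsub>UT_group n\<^esub> c
       \<otimes>\<^bsub>UT_group n\<^esub> inv\<^bsub>UT_group n\<^esub> x \<otimes>\<^bsub>UT_group n\<^esub> inv\<^bsub>UT_group n\<^esub> y"
    using assms(1,2) cU by (simp add: ut_comm_def c[symmetric] G.inv_mult_group G.m_assoc)
  also have "\<dots> = x \<otimes>\<^bsub>UT_group n\<^esub> (y \<otimes>\<^bsub>UT_group n\<^esub> c) \<otimes>\<^bsub>UT_group n\<^esub> inv\<^bsub>UT_group n\<^esub> c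
       \<otimes>\<^bsub>UT_group n\<^esub> inv\<^bsub>UT_group n\<^esub> x \<otimes>\<^bsub>UT_group n\<^esub> inv\<^bsub>UT_group n\<^esub> y"
    using cc by (simp add: c)
  also have "\<dots> = ut_comm n x y"
    using assms(1,2) cU by (simp add: ut_comm_def c[symmetric] G.m_assoc)
  finally show ?thesis .
qed

definition Es :: "nat \<Rightarrow> nat \<Rightarrow> 'a::field \<Rightarrow> 'a mat" where
  "Es p q c = (\<lambda>a b. if a = p \<and> b = q then c else 0)"

lemma tr_mk: "tr n p q c = mk n (Es p q c)"
  unfolding tr_def mk_def Es_def by simp

lemma mult_Es_right: "ut_mult S (Es p q c) a b = (if b = q \<and> a \<le> p \<and> p \<le> q then S a p * c else 0)"
proof -
  have "ut_mult S (Es p q c) a b = (\<Sum>l\<in>{a..b}. if l = p then (if b = q then S a p * c else 0) else 0)"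
    unfolding ut_mult_def Es_def by (rule sum.cong) auto
  then show ?thesis by auto
qed

lemma mult_Es_left: "ut_mult (Es p q c) S a b = (if a = p \<and> p \<le> q \<and> q \<le> b then c * S q b else 0)"
proof -
  have "ut_mult (Es p q c) S a b = (\<Sum>l\<in>{a..b}. if l = q then (if a = p then c * S q b else 0) else 0)"
    unfolding ut_mult_def Es_def by (rule sum.cong) auto
  then show ?thesis by auto
qed

lemma mult_zero: "(\<And>l. S a l * T l b = 0) \<Longrightarrow> ut_mult S T a b = 0"
  unfolding ut_mult_def by (rule sum.neutral) blast

lemma mult_add_right: "ut_mult S (\<lambda>a b. T1 a b + T2 a b) a b = ut_mult S T1 a b + ut_mult S T2 a b"
  unfolding ut_mult_def by (simp add: distrib_left sum.distrib)

lemma mult_add_left: "ut_mult (\<lambda>a b. T1 a b + T2 a b) S a b = ut_mult T1 S a b + ut_mult T2 S a b"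
  unfolding ut_mult_def by (simp add: distrib_right sum.distrib)

lemma spt_Es: "idx n p \<Longrightarrow> idx n q \<Longrightarrow> p < q \<Longrightarrow> spt n (Es p q c)"
  unfolding spt_def Es_def by auto

lemma mk_eq: "(\<And>a b. S a b = T a b) \<Longrightarrow> mk n S = mk n T"
  unfolding mk_def by simp

lemma idx_le: "enat m \<le> n \<Longrightarrow> 1 \<le> i \<Longrightarrow> i \<le> m \<Longrightarrow> idx n i"
  unfolding idx_def by (meson enat_ord_simps(1) order_trans)

lemma prod_col:
  assumes "enat c \<le> n" "m \<le> c"
  shows "1 \<le> l \<Longrightarrow> ut_prod n (map (\<lambda>i. tr n i c (\<alpha> i)) [l..<m])
     = mk n (\<lambda>a b. if l \<le> a \<and> a < m \<and> b = c then \<alpha> a else 0)"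
proof (induction "m - l" arbitrary: l)
  case 0
  then show ?case unfolding ut_prod_def mk_def by (auto intro!: ext)
next
  case (Suc d)
  then have lm: "l < m" by auto
  then have up: "[l..<m] = l # [Suc l..<m]" by (simp add: upt_rec)
  have IH: "ut_prod n (map (\<lambda>i. tr n i c (\<alpha> i)) [Suc l..<m])
     = mk n (\<lambda>a b. if Suc l \<le> a \<and> a < m \<and> b = c then \<alpha> a else 0)"
    using Suc by auto
  have s1: "spt n (Es l c (\<alpha> l))" using Suc(3) lm assms
    by (intro spt_Es) (auto intro: idx_le)
  have s2: "spt n (\<lambda>a b. if Suc l \<le> a \<and> a < m \<and> b = c then \<alpha> a else 0)"
    using Suc(3) lm assms unfolding spt_def by (auto intro: idx_le)
  have "ut_prod n (map (\<lambda>i. tr n i c (\<alpha> i)) [l..<m]) = ut_mult (tr n l c (\<alpha> l))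
      (ut_prod n (map (\<lambda>i. tr n i c (\<alpha> i)) [Suc l..<m]))"
    unfolding up ut_prod_def by simp
  also have "\<dots> = mk n (\<lambda>a b. if l \<le> a \<and> a < m \<and> b = c then \<alpha> a else 0)"
    unfolding IH unfolding tr_mk mk_mult[OF s1 s2] using lm assms
    by (intro mk_eq) (unfold mult_Es_left, auto simp: Es_def)
  finally show ?case .
qed

lemma mk_mult_eq: assumes "spt n S" "spt n T" "\<And>a b. S a b + T a b + ut_mult S T a b = R a b"
  shows "ut_mult (mk n S) (mk n T) = mk n R"
  unfolding mk_mult[OF assms(1,2)] by (rule mk_eq) (rule assms(3))

lemma spt_mult_eq: assumes "spt n S" "spt n T" "\<And>a b. S a b + T a b + ut_mult S T a b = R a b"
  shows "spt n R"
proof -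
  have "R = (\<lambda>a b. S a b + T a b + ut_mult S T a b)" using assms(3) by auto
  then show ?thesis using spt_mult[OF assms(1,2)] by simp
qed

definition Acol :: "nat \<Rightarrow> (nat \<Rightarrow> 'a::field) \<Rightarrow> 'a mat" where
  "Acol k \<alpha> = (\<lambda>a b. if 1 \<le> a \<and> a < k \<and> b = k then \<alpha> a else 0)"

definition Ysp :: "nat \<Rightarrow> 'a::field \<Rightarrow> (nat \<Rightarrow> 'a) \<Rightarrow> 'a mat" where
  "Ysp k \<beta> \<alpha> = (\<lambda>a b. Es (k+1) (k+2) \<beta> a b + Acol k \<alpha> a b)"

definition Gsp :: "nat \<Rightarrow> 'a::field \<Rightarrow> (nat \<Rightarrow> 'a) \<Rightarrow> 'a mat" where
  "Gsp k \<beta> \<alpha> = (\<lambda>a b. (if 1 \<le> a \<and> a < k \<and> b = k+1 then \<alpha> a else 0)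
     + (if a = k \<and> b = k+2 then -\<beta> else 0) + (if 1 \<le> a \<and> a < k \<and> b = k+2 then -\<beta> * \<alpha> a else 0))"

definition Zsp :: "nat \<Rightarrow> (nat \<Rightarrow> 'a::field) \<Rightarrow> 'a mat" where
  "Zsp k \<gamma> = (\<lambda>a b. if 1 \<le> a \<and> a < k+1 \<and> b = k+3 then \<gamma> a else 0)"

context
  fixes n :: enat and k :: nat
  assumes kn: "enat (k+3) \<le> n" and k2: "2 \<le> k"
begin

lemma idxk: "1 \<le> i \<Longrightarrow> i \<le> k+3 \<Longrightarrow> idx n i"
  using idx_le[OF kn] .

lemma spt_Ysp: "spt n (Ysp k \<beta> \<alpha>)"
  unfolding spt_def Ysp_def Es_def Acol_def using k2 by (auto intro: idxk)

lemma spt_Gsp: "spt n (Gsp k \<beta> \<alpha>)"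
  unfolding spt_def Gsp_def using k2 by (auto intro: idxk)

lemma spt_Zsp: "spt n (Zsp k \<gamma>)"
  unfolding spt_def Zsp_def using k2 by (auto intro: idxk)

lemma spt_Acol: "spt n (Acol k \<alpha>)"
  unfolding spt_def Acol_def using k2 by (auto intro: idxk)

lemma spt_E: "1 \<le> p \<Longrightarrow> p < q \<Longrightarrow> q \<le> k+3 \<Longrightarrow> spt n (Es p q c)"
  by (rule spt_Es) (auto intro: idxk)

lemma y_form: "ut_mult (tr n (k+1) (k+2) \<beta>) (ut_prod n (map (\<lambda>i. tr n i k (\<alpha> i)) [1..<k]))
   = mk n (Ysp k \<beta> \<alpha>)"
proof -
  have "ut_prod n (map (\<lambda>i. tr n i k (\<alpha> i)) [1..<k]) = mk n (Acol k \<alpha>)"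
    unfolding Acol_def by (rule prod_col) (use kn in \<open>auto intro: order_trans[rotated] simp: enat_ord_simps\<close>)
  then show ?thesis unfolding tr_mk
    by (simp, intro mk_mult_eq spt_E spt_Acol) (auto simp: mult_Es_left Ysp_def Acol_def)
qed

lemma z_form: "ut_prod n (map (\<lambda>i. tr n i (k+3) (\<gamma> i)) [1..<k+1]) = mk n (Zsp k \<gamma>)"
  unfolding Zsp_def by (rule prod_col) (use kn in auto)

lemma mult_Acol: "(\<And>l. 1 \<le> l \<Longrightarrow> l < k \<Longrightarrow> S a l = 0) \<Longrightarrow> ut_mult S (Acol k \<alpha>) a b = 0"
  by (rule mult_zero) (auto simp: Acol_def)

lemma idA:
  "ut_mult (mk n (Ysp k \<beta> \<alpha>)) (mk n (Es k (k+1) 1))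
   = ut_mult (ut_mult (mk n (Gsp k \<beta> \<alpha>)) (mk n (Es k (k+1) 1))) (mk n (Ysp k \<beta> \<alpha>))"
proof -
  define GT where "GT = (\<lambda>a b. Gsp k \<beta> \<alpha> a b + Es k (k+1) (1::'a) a b)"
  define L where "L = (\<lambda>a b. Ysp k \<beta> \<alpha> a b + Es k (k+1) (1::'a) a b
     + (if 1 \<le> a \<and> a<k \<and> b = k+1 then \<alpha> a else 0))"
  have sE: "spt n (Es k (k+1) (1::'a))" using k2 by (intro spt_E) auto
  have eG: "Gsp k \<beta> \<alpha> a b + Es k (k+1) 1 a b + ut_mult (Gsp k \<beta> \<alpha>) (Es k (k+1) 1) a b = GT a b" for a b
    unfolding GT_def mult_Es_right by (simp add: Gsp_def)
  have 1: "ut_mult (mk n (Gsp k \<beta> \<alpha>)) (mk n (Es k (k+1) 1)) = mk n GT"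
    by (rule mk_mult_eq[OF spt_Gsp sE eG])
  have sGT: "spt n GT" by (rule spt_mult_eq[OF spt_Gsp sE eG])
  have 2: "ut_mult (mk n (Ysp k \<beta> \<alpha>)) (mk n (Es k (k+1) 1)) = mk n L"
    by (rule mk_mult_eq[OF spt_Ysp sE]) (unfold mult_Es_right, auto simp: L_def Ysp_def Es_def Acol_def)
  have 3: "ut_mult (mk n GT) (mk n (Ysp k \<beta> \<alpha>)) = mk n L"
  proof (rule mk_mult_eq[OF sGT spt_Ysp])
    fix a b
    have z: "ut_mult GT (Acol k \<alpha>) a b = 0"
      by (rule mult_Acol) (auto simp: GT_def Gsp_def Es_def)
    show "GT a b + Ysp k \<beta> \<alpha> a b + ut_mult GT (Ysp k \<beta> \<alpha>) a b = L a b"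
      unfolding Ysp_def mult_add_right mult_Es_right z
      using k2 by (auto simp: GT_def L_def Gsp_def Es_def Acol_def Ysp_def)
  qed
  show ?thesis using 1 2 3 by simp
qed

lemma idB:
  assumes "\<gamma> k = -\<beta>" "\<And>a. 1 \<le> a \<Longrightarrow> a < k \<Longrightarrow> \<gamma> a = -\<beta> * \<alpha> a"
  shows "ut_mult (mk n (Gsp k \<beta> \<alpha>)) (mk n (Es (k+2) (k+3) 1))
   = ut_mult (ut_mult (mk n (Zsp k \<gamma>)) (mk n (Es (k+2) (k+3) 1))) (mk n (Gsp k \<beta> \<alpha>))"
proof -
  define ZT where "ZT = (\<lambda>a b. Zsp k \<gamma> a b + Es (k+2) (k+3) (1::'a) a b)"
  define L where "L = (\<lambda>a b. Gsp k \<beta> \<alpha> a b + Es (k+2) (k+3) (1::'a) a b + Zsp k \<gamma> a b)"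
  have sE: "spt n (Es (k+2) (k+3) (1::'a))" using k2 by (intro spt_E) auto
  have eZ: "Zsp k \<gamma> a b + Es (k+2) (k+3) 1 a b + ut_mult (Zsp k \<gamma>) (Es (k+2) (k+3) 1) a b = ZT a b" for a b
    unfolding ZT_def mult_Es_right by (simp add: Zsp_def)
  have 1: "ut_mult (mk n (Zsp k \<gamma>)) (mk n (Es (k+2) (k+3) 1)) = mk n ZT"
    by (rule mk_mult_eq[OF spt_Zsp sE eZ])
  have sZT: "spt n ZT" by (rule spt_mult_eq[OF spt_Zsp sE eZ])
  have 2: "ut_mult (mk n (Gsp k \<beta> \<alpha>)) (mk n (Es (k+2) (k+3) 1)) = mk n L"
    by (rule mk_mult_eq[OF spt_Gsp sE]) (unfold mult_Es_right, use k2 in \<open>auto simp: L_def Gsp_def Es_def Zsp_def assms less_Suc_eq\<close>)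
  have 3: "ut_mult (mk n ZT) (mk n (Gsp k \<beta> \<alpha>)) = mk n L"
  proof (rule mk_mult_eq[OF sZT spt_Gsp])
    fix a b
    have z: "ut_mult ZT (Gsp k \<beta> \<alpha>) a b = 0"
      by (rule mult_zero) (auto simp: ZT_def Gsp_def Es_def Zsp_def)
    show "ZT a b + Gsp k \<beta> \<alpha> a b + ut_mult ZT (Gsp k \<beta> \<alpha>) a b = L a b"
      unfolding z by (auto simp: ZT_def L_def)
  qed
  show ?thesis using 1 2 3 by simp
qed

lemma idC:
  assumes "\<gamma> k = 0" "\<And>a. 1 \<le> a \<Longrightarrow> a < k \<Longrightarrow> \<gamma> a = \<alpha> a"
  shows "ut_mult (mk n (Ysp k \<beta> \<alpha>)) (mk n (Es k (k+3) 1))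
   = ut_mult (ut_mult (mk n (Zsp k \<gamma>)) (mk n (Es k (k+3) 1))) (mk n (Ysp k \<beta> \<alpha>))"
proof -
  define ZT where "ZT = (\<lambda>a b. Zsp k \<gamma> a b + Es k (k+3) (1::'a) a b)"
  define L where "L = (\<lambda>a b. Ysp k \<beta> \<alpha> a b + Es k (k+3) (1::'a) a b + Zsp k \<gamma> a b)"
  have sE: "spt n (Es k (k+3) (1::'a))" using k2 by (intro spt_E) auto
  have eZ: "Zsp k \<gamma> a b + Es k (k+3) 1 a b + ut_mult (Zsp k \<gamma>) (Es k (k+3) 1) a b = ZT a b" for a b
    unfolding ZT_def mult_Es_right by (simp add: Zsp_def)
  have 1: "ut_mult (mk n (Zsp k \<gamma>)) (mk n (Es k (k+3) 1)) = mk n ZT"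
    by (rule mk_mult_eq[OF spt_Zsp sE eZ])
  have sZT: "spt n ZT" by (rule spt_mult_eq[OF spt_Zsp sE eZ])
  have 2: "ut_mult (mk n (Ysp k \<beta> \<alpha>)) (mk n (Es k (k+3) 1)) = mk n L"
    by (rule mk_mult_eq[OF spt_Ysp sE]) (unfold mult_Es_right, use k2 in \<open>auto simp: L_def Ysp_def Es_def Zsp_def Acol_def assms\<close>)
  have 3: "ut_mult (mk n ZT) (mk n (Ysp k \<beta> \<alpha>)) = mk n L"
  proof (rule mk_mult_eq[OF sZT spt_Ysp])
    fix a b
    have z: "ut_mult ZT (Ysp k \<beta> \<alpha>) a b = 0"
      by (rule mult_zero) (auto simp: ZT_def Ysp_def Es_def Zsp_def Acol_def)
    show "ZT a b + Ysp k \<beta> \<alpha> a b + ut_mult ZT (Ysp k \<beta> \<alpha>) a b = L a b"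
      unfolding z by (auto simp: ZT_def L_def)
  qed
  show ?thesis using 1 2 3 by simp
qed

end


theorem mainTheorem3:
  fixes n :: enat and \<phi> :: "('a::field) mat \<Rightarrow> 'a mat" and k :: nat
  assumes "PC_map n \<phi>" and "almost_identity n \<phi>"
    and "2 \<le> k" and "enat k \<le> n - 3"
    and "cond_Z n \<phi> (k - 1)" and "cond_Y n \<phi> k"
  shows "cond_Z n \<phi> k"
proof -
  have k2: "2 \<le> k" by fact
  have kn: "enat (k+3) \<le> n"
  proof (cases n)
    case (enat m)
    then show ?thesis using assms(4) k2 by (simp add: numeral_eq_enat)
  qed simp
  have bij: "bij_betw \<phi> (UT n) (UT n)" and
    pc: "\<And>x y. x \<in> UT n \<Longrightarrow> y \<in> UT n \<Longrightarrow> \<phi> (ut_comm n x y) = ut_comm n (\<phi> x) (\<phi> y)"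
    using assms(1) unfolding PC_map_def by auto
  have ai: "\<phi> (tr n i j c) = tr n i j c" if "1 \<le> i" "i < j" "j \<le> k+3" for i j c
    using assms(2) that idxk[OF kn k2, of i] idxk[OF kn k2, of j] unfolding almost_identity_def by auto
  have cy: "\<exists>c \<in> ut_center n. \<phi> (mk n (Ysp k \<beta> \<alpha>)) = ut_mult (mk n (Ysp k \<beta> \<alpha>)) c" for \<beta> \<alpha>
    using assms(6) unfolding cond_Y_def Let_def y_form[OF kn k2] by blast
  have yU: "mk n (Ysp k \<beta> \<alpha>) \<in> UT n" for \<beta> \<alpha> by (rule mk_UT[OF spt_Ysp[OF kn k2]])
  have gU: "mk n (Gsp k \<beta> \<alpha>) \<in> UT n" for \<beta> \<alpha> by (rule mk_UT[OF spt_Gsp[OF kn k2]])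
  have zU: "mk n (Zsp k \<gamma>) \<in> UT n" for \<gamma> by (rule mk_UT[OF spt_Zsp[OF kn k2]])
  have eU: "mk n (Es p q c) \<in> UT n" if "1 \<le> p" "p < q" "q \<le> k+3" for p q c
    by (rule mk_UT[OF spt_E[OF kn k2 that]])
  have fix_Y: "\<phi> (ut_comm n (mk n (Ysp k \<beta> \<alpha>)) t) = ut_comm n (mk n (Ysp k \<beta> \<alpha>)) t"
    if "t \<in> UT n" "\<phi> t = t" for \<beta> \<alpha> t
  proof -
    obtain c where c: "c \<in> ut_center n" "\<phi> (mk n (Ysp k \<beta> \<alpha>)) = ut_mult (mk n (Ysp k \<beta> \<alpha>)) c"
      using cy by blast
    show ?thesis using pc[OF yU that(1)] c comm_center[OF yU that(1) c(1)] that(2) by simp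
  qed
  show ?thesis unfolding cond_Z_def Let_def z_form[OF kn k2]
  proof
    fix \<gamma> :: "nat \<Rightarrow> 'a"
    show "\<phi> (mk n (Zsp k \<gamma>)) = mk n (Zsp k \<gamma>)"
    proof (cases "\<gamma> k = 0")
      case True
      have t3: "\<phi> (mk n (Es k (k+3) 1)) = mk n (Es k (k+3) 1)"
        using ai[of k "k+3" 1] k2 by (simp add: tr_mk)
      have "ut_comm n (mk n (Ysp k 0 \<gamma>)) (mk n (Es k (k+3) 1)) = mk n (Zsp k \<gamma>)"
        by (rule comm_eq[OF yU eU zU idC[OF kn k2]]) (use k2 True in auto)
      moreover have "mk n (Es k (k+3) 1) \<in> UT n" using k2 by (intro eU) auto
      ultimately show ?thesis using fix_Y[of "mk n (Es k (k+3) 1)" 0 \<gamma>] t3 by simp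
    next
      case False
      define \<beta> where "\<beta> = - \<gamma> k"
      define \<alpha> where "\<alpha> = (\<lambda>a. \<gamma> a / \<gamma> k)"
      have t1: "\<phi> (mk n (Es k (k+1) 1)) = mk n (Es k (k+1) 1)"
        using ai[of k "k+1" 1] k2 by (simp add: tr_mk)
      have t2: "\<phi> (mk n (Es (k+2) (k+3) 1)) = mk n (Es (k+2) (k+3) 1)"
        using ai[of "k+2" "k+3" 1] k2 by (simp add: tr_mk)
      have g: "ut_comm n (mk n (Ysp k \<beta> \<alpha>)) (mk n (Es k (k+1) 1)) = mk n (Gsp k \<beta> \<alpha>)"
        by (rule comm_eq[OF yU eU gU idA[OF kn k2]]) (use k2 in auto)
      have fg: "\<phi> (mk n (Gsp k \<beta> \<alpha>)) = mk n (Gsp k \<beta> \<alpha>)"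
      proof -
        have "mk n (Es k (k+1) 1) \<in> UT n" using k2 by (intro eU) auto
        then show ?thesis using fix_Y[of "mk n (Es k (k+1) 1)" \<beta> \<alpha>] t1 g by simp
      qed
      have z: "ut_comm n (mk n (Gsp k \<beta> \<alpha>)) (mk n (Es (k+2) (k+3) 1)) = mk n (Zsp k \<gamma>)"
        by (rule comm_eq[OF gU eU zU idB[OF kn k2]]) (use k2 False in \<open>auto simp: \<beta>_def \<alpha>_def\<close>)
      have "mk n (Es (k+2) (k+3) 1) \<in> UT n" using k2 by (intro eU) auto
      from pc[OF gU[of \<beta> \<alpha>] this] show ?thesis using fg t2 z by simp
    qed
  qed
qed

end
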